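(* For every positive integer $s$, the maximum size $l(s)$ of an $(s,s+1,s+2)$-core partition is $$l(s)=\begin{cases} m\binom{m+1}{3}, & s=2m-1,\\[4pt] (m+1)\binom{m+1}{3}+\binom{m+2}{3}, & s=2m.\end{cases}$$
   Context: A partition is an $(s,s+1,s+2)$-core if none of the hook lengths of the boxes of its Young diagram is divisible by $s$, by $s+1$, or by $s+2$. The size of a partition is the sum of its parts. *)

theory Defs
  imports Main
begin

definition partition :: "nat list \<Rightarrow> bool" where
  "partition p \<longleftrightarrow> sorted_wrt (\<ge>) p \<and> (\<forall>x\<in>set p. 0 < x)"

definition psize :: "nat list \<Rightarrow> nat" where
  "psize p = sum_list p"

text \<open>Cells of the Young diagram (0-indexed row i, column j).\<close>
definition cells :: "nat list \<Rightarrow> (nat \<times> nat) set" where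
  "cells p = {(i, j). i < length p \<and> j < p ! i}"

definition conj_part :: "nat list \<Rightarrow> nat \<Rightarrow> nat" where
  "conj_part p j = card {i. i < length p \<and> j < p ! i}"

definition hook :: "nat list \<Rightarrow> nat \<Rightarrow> nat \<Rightarrow> nat" where
  "hook p i j = (p ! i - j - 1) + (conj_part p j - i - 1) + 1"

definition is_core :: "nat \<Rightarrow> nat list \<Rightarrow> bool" where
  "is_core t p \<longleftrightarrow> (\<forall>(i, j)\<in>cells p. \<not> t dvd hook p i j)"

definition is_s_triple_core :: "nat \<Rightarrow> nat list \<Rightarrow> bool" where
  "is_s_triple_core s p \<longleftrightarrow> partition p \<and> is_core s p \<and> is_core (s+1) p \<and> is_core (s+2) p"

definition is_max_triple_core_size :: "nat \<Rightarrow> nat \<Rightarrow> bool" where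
  "is_max_triple_core_size s l \<longleftrightarrow>
     (\<exists>p. is_s_triple_core s p \<and> psize p = l) \<and> (\<forall>p. is_s_triple_core s p \<longrightarrow> psize p \<le> l)"

end

theory Submission
  imports Defs
begin


definition beta :: "nat list \<Rightarrow> nat \<Rightarrow> nat" where
  "beta p i = p ! i + (length p - 1 - i)"

definition bset :: "nat list \<Rightarrow> nat set" where
  "bset p = beta p ` {..<length p}"

lemma part_mono:
  assumes "partition p" "i \<le> i'" "i' < length p"
  shows "p ! i' \<le> p ! i"
proof (cases "i = i'")
  case False
  with assms show ?thesis
    unfolding partition_def by (auto simp: sorted_wrt_iff_nth_less)
qed simp

lemma part_pos:
  assumes "partition p" "i < length p"
  shows "0 < p ! i"
  using assms unfolding partition_def by auto

lemma beta_gap: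
  assumes "partition p" "a \<le> b" "b < length p"
  shows "beta p b + (b - a) \<le> beta p a"
  using part_mono[OF assms] assms unfolding beta_def by auto

lemma beta_less:
  assumes "partition p" "a < b" "b < length p"
  shows "beta p b < beta p a"
  using beta_gap[OF assms(1) _ assms(3), of a] assms by auto

lemma beta_inj:
  assumes "partition p"
  shows "inj_on (beta p) {..<length p}"
proof (rule inj_onI)
  fix a b assume "a \<in> {..<length p}" "b \<in> {..<length p}" "beta p a = beta p b"
  then show "a = b" using beta_less[OF assms, of a b] beta_less[OF assms, of b a]
    by (cases a b rule: linorder_cases) auto
qed

lemma beta_pos:
  assumes "partition p" "i < length p"
  shows "0 < beta p i"
  using part_pos[OF assms] unfolding beta_def by auto

lemma zero_notin_bset:
  assumes "partition p" shows "0 \<notin> bset p"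
  using beta_pos[OF assms] unfolding bset_def by (auto simp del: less_nat_zero_code, fastforce)

lemma down_closed_eq:
  fixes S :: "nat set"
  assumes "finite S" "\<And>i i'. i \<in> S \<Longrightarrow> i' < i \<Longrightarrow> i' \<in> S"
  shows "S = {..<card S}"
proof -
  define m where "m = (if S = {} then 0 else Suc (Max S))"
  have "S = {..<m}"
  proof
    show "S \<subseteq> {..<m}" using assms(1) by (auto simp: m_def less_Suc_eq_le)
    show "{..<m} \<subseteq> S"
    proof
      fix i assume "i \<in> {..<m}"
      then have "S \<noteq> {}" "i \<le> Max S" by (auto simp: m_def split: if_splits)
      then show "i \<in> S" using assms Max_in[OF assms(1)]
        by (metis le_neq_implies_less)
    qed
  qed
  then show ?thesis by simp
qed

lemma conj_part_iff:
  assumes "partition p" "i < length p"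
  shows "i < conj_part p j \<longleftrightarrow> j < p ! i"
proof -
  let ?S = "{i. i < length p \<and> j < p ! i}"
  have dc: "i' \<in> ?S" if "i0 \<in> ?S" "i' < i0" for i0 i'
  proof -
    have "p ! i0 \<le> p ! i'" using that by (intro part_mono[OF assms(1)]) auto
    then show ?thesis using that by auto
  qed
  have "?S = {..<card ?S}"
    by (rule down_closed_eq) (simp, rule dc)
  then have "i \<in> ?S \<longleftrightarrow> i < card ?S" by blast
  then show ?thesis using assms unfolding conj_part_def by simp
qed

lemma conj_part_le:
  "conj_part p j \<le> length p"
  unfolding conj_part_def
  by (rule order_trans[OF card_mono[of "{..<length p}"]]) auto

lemma hook_beta:
  assumes "partition p" "i < length p" "j < p ! i"
  shows "hook p i j + (j + (length p - conj_part p j)) = beta p i"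
    and "j + (length p - conj_part p j) \<notin> bset p"
proof -
  let ?n = "length p" and ?c = "conj_part p j"
  have ic: "i < ?c" using conj_part_iff[OF assms(1,2)] assms(3) by simp
  have cn: "?c \<le> ?n" by (rule conj_part_le)
  show "hook p i j + (j + (?n - ?c)) = beta p i"
    using ic cn assms(3) unfolding hook_def beta_def by auto
  show "j + (?n - ?c) \<notin> bset p"
  proof
    assume "j + (?n - ?c) \<in> bset p"
    then obtain i' where i': "i' < ?n" "beta p i' = j + (?n - ?c)" unfolding bset_def by auto
    show False
    proof (cases "i' < ?c")
      case True
      then have "j < p ! i'" using conj_part_iff[OF assms(1) i'(1)] by simp
      then show False using i' True cn unfolding beta_def by auto
    next
      case False
      then have "p ! i' \<le> j" using conj_part_iff[OF assms(1) i'(1)] by simp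
      then show False using i' False cn unfolding beta_def by auto
    qed
  qed
qed

lemma hook_exists:
  assumes "partition p" "i < length p" "x < beta p i" "x \<notin> bset p"
  shows "\<exists>j < p ! i. hook p i j + x = beta p i"
proof -
  let ?n = "length p"
  let ?S = "{i'. i' < ?n \<and> x < beta p i'}"
  have dc: "i' \<in> ?S" if "i0 \<in> ?S" "i' < i0" for i0 i'
  proof -
    have "beta p i0 < beta p i'" using that by (intro beta_less[OF assms(1)]) auto
    then show ?thesis using that by auto
  qed
  have Seq: "?S = {..<card ?S}"
    by (rule down_closed_eq) (simp, rule dc)
  define c where "c = card ?S"
  have memS: "i' < c \<longleftrightarrow> x < beta p i'" if "i' < ?n" for i'
    using Seq that unfolding c_def by blast
  have cn: "c \<le> ?n" unfolding c_def by (rule order_trans[OF card_mono[of "{..<?n}"]]) auto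
  have ic: "i < c" using memS[OF assms(2)] assms(3) by simp
  have lowb: "beta p i' < x" if "c \<le> i'" "i' < ?n" for i'
  proof -
    have "beta p i' \<le> x" using memS[OF that(2)] that(1) by simp
    moreover have "beta p i' \<noteq> x" using assms(4) that(2) unfolding bset_def by auto
    ultimately show ?thesis by simp
  qed
  have "?n - c \<le> x"
  proof -
    have "beta p ` {c..<?n} \<subseteq> {..<x}" using lowb by auto
    moreover have "inj_on (beta p) {c..<?n}"
      using beta_inj[OF assms(1)] by (rule inj_on_subset) auto
    ultimately have "card {c..<?n} \<le> card {..<x}"
      by (metis card_image card_mono finite_lessThan)
    then show ?thesis by simp
  qed
  define j where "j = x + c - ?n"
  have big: "j < p ! i'" if "i' < c" for i'
  proof -
    have c1: "c - 1 < ?n" "i' \<le> c - 1" using that cn by auto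
    have "x < beta p (c - 1)" using memS[OF c1(1)] that by simp
    moreover have "p ! (c - 1) \<le> p ! i'" using part_mono[OF assms(1) c1(2) c1(1)] .
    ultimately have "x < p ! (c - 1) + (?n - 1 - (c - 1))" "p ! (c - 1) \<le> p ! i'"
      unfolding beta_def by auto
    moreover have "?n - 1 - (c - 1) = ?n - c" using that by auto
    ultimately have "x < p ! (c - 1) + (?n - c)" "p ! (c - 1) \<le> p ! i'" by auto
    moreover have "0 < p ! i'" using part_pos[OF assms(1)] that cn by auto
    ultimately show ?thesis using that cn unfolding j_def by arith
  qed
  have small: "p ! i' \<le> j" if "c \<le> i'" "i' < ?n" for i'
  proof -
    have "beta p c < x" using lowb[of c] that by auto
    moreover have "p ! i' \<le> p ! c" using part_mono[OF assms(1) that(1) that(2)] .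
    ultimately show ?thesis using that cn \<open>?n - c \<le> x\<close> unfolding j_def beta_def by auto
  qed
  have cp: "conj_part p j = c"
  proof -
    have "{i'. i' < ?n \<and> j < p ! i'} = {..<c}"
      using big small cn by (auto simp: not_le[symmetric])
    then show ?thesis unfolding conj_part_def by simp
  qed
  have "j < p ! i" using big[OF ic] .
  moreover have "hook p i j + x = beta p i"
    unfolding hook_def cp using ic \<open>j < p ! i\<close> cn \<open>?n - c \<le> x\<close> unfolding j_def beta_def by auto
  ultimately show ?thesis by blast
qed




lemma core_closed:
  assumes "partition p" "is_core t p" "0 < t" "b \<in> bset p" "t \<le> b"
  shows "b - t \<in> bset p"
proof (rule ccontr)
  assume nb: "b - t \<notin> bset p"
  obtain i where i: "i < length p" "b = beta p i" using assms(4) unfolding bset_def by auto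
  obtain j where j: "j < p ! i" "hook p i j + (b - t) = beta p i"
    using hook_exists[OF assms(1) i(1) _ nb] i assms(3,5) by auto
  have "hook p i j = t" using j(2) i(2) assms(5) by simp
  moreover have "(i, j) \<in> cells p" using i j unfolding cells_def by simp
  ultimately show False using assms(2) unfolding is_core_def by auto
qed

lemma closed_core:
  assumes "partition p" "0 < t" "\<And>b. b \<in> bset p \<Longrightarrow> t \<le> b \<Longrightarrow> b - t \<in> bset p"
  shows "is_core t p"
  unfolding is_core_def
proof (clarify)
  fix i j assume c: "(i, j) \<in> cells p" and d: "t dvd hook p i j"
  then have i: "i < length p" and j: "j < p ! i" unfolding cells_def by auto
  let ?x = "j + (length p - conj_part p j)"
  have hb: "hook p i j + ?x = beta p i" and nx: "?x \<notin> bset p"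
    using hook_beta[OF assms(1) i j] by auto
  have bi: "beta p i \<in> bset p" using i unfolding bset_def by auto
  have all: "q * t \<le> beta p i \<Longrightarrow> beta p i - q * t \<in> bset p" for q
  proof (induction q)
    case 0 then show ?case using bi by simp
  next
    case (Suc q)
    then have "beta p i - q * t \<in> bset p" by simp
    moreover have "t \<le> beta p i - q * t" using Suc.prems by simp
    ultimately have "beta p i - q * t - t \<in> bset p" by (rule assms(3))
    then show ?case by (simp add: algebra_simps)
  qed
  obtain q where q: "hook p i j = q * t" using d by (auto simp: dvd_def mult.commute)
  have "beta p i - q * t = ?x" using hb q by simp
  moreover have "q * t \<le> beta p i" using hb q by simp
  ultimately show False using all nx by metis
qed

lemma card_bset:
  assumes "partition p" shows "card (bset p) = length p"
  unfolding bset_def using card_image[OF beta_inj[OF assms]] by simp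

lemma sum_bset:
  assumes "partition p"
  shows "sum id (bset p) = psize p + (\<Sum>i<length p. i)"
proof -
  let ?n = "length p"
  have "sum id (bset p) = (\<Sum>i<?n. beta p i)"
    unfolding bset_def by (simp add: sum.reindex[OF beta_inj[OF assms]])
  also have "\<dots> = (\<Sum>i<?n. p ! i) + (\<Sum>i<?n. ?n - 1 - i)"
    unfolding beta_def by (rule sum.distrib)
  also have "(\<Sum>i<?n. ?n - 1 - i) = (\<Sum>i<?n. i)"
    using sum.nat_diff_reindex[of "\<lambda>i. i" ?n] by simp
  also have "(\<Sum>i<?n. p ! i) = psize p"
    unfolding psize_def by (simp add: sum_list_sum_nth atLeast0LessThan)
  finally show ?thesis .
qed

lemma gauss2: "2 * (\<Sum>i<n. i) = n * (n - 1 :: nat)"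
proof (induction n)
  case (Suc n)
  have "2 * (\<Sum>i<Suc n. i) = 2 * (\<Sum>i<n. i) + 2 * n" by simp
  also have "\<dots> = Suc n * (Suc n - 1)" using Suc.IH by (cases n) auto
  finally show ?case .
qed simp

lemma exists_part:
  "finite B \<Longrightarrow> 0 \<notin> B \<Longrightarrow> \<exists>p. partition p \<and> bset p = B"
proof (induction "card B" arbitrary: B)
  case 0
  then have "B = {}" by simp
  then show ?case by (intro exI[of _ "[]"]) (auto simp: partition_def bset_def)
next
  case (Suc n)
  then have ne: "B \<noteq> {}" by auto
  define M where "M = Max B"
  define B' where "B' = B - {M}"
  have MB: "M \<in> B" using Max_in[OF Suc.prems(1) ne] M_def by simp
  have cB': "card B' = n" using Suc.hyps(2) MB unfolding B'_def by simp
  obtain p' where p': "partition p'" "bset p' = B'"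
    using Suc.hyps(1)[of B'] cB' Suc.prems unfolding B'_def by auto
  have lp': "length p' = n" using card_bset[OF p'(1)] p'(2) cB' by simp
  have lt: "b < M" if "b \<in> B'" for b
    using that Max_ge[OF Suc.prems(1)] unfolding B'_def M_def
    by (metis DiffD1 DiffD2 insertI1 le_neq_implies_less)
  define a where "a = M - n"
  define p where "p = a # p'"
  have M0: "0 < M" using MB Suc.prems(2) by (cases M) auto
  have ha: "p' ! 0 + n \<le> M" if "n > 0"
  proof -
    have "beta p' 0 \<in> B'" using p'(2) lp' that unfolding bset_def by auto
    then have "beta p' 0 < M" by (rule lt)
    then show ?thesis unfolding beta_def using lp' that by auto
  qed
  have apos: "0 < a"
  proof (cases "n = 0")
    case True then show ?thesis using M0 unfolding a_def by simp
  next
    case False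
    then have "0 < p' ! 0" using part_pos[OF p'(1)] lp' by auto
    then show ?thesis using ha False unfolding a_def by auto
  qed
  have age: "x \<le> a" if xin: "x \<in> set p'" for x
  proof -
    obtain k where k: "k < n" "x = p' ! k" using xin lp'[symmetric] by (auto simp: in_set_conv_nth)
    have "p' ! k \<le> p' ! 0" using part_mono[OF p'(1), of 0 k] k lp' by simp
    then show ?thesis using ha k unfolding a_def by auto
  qed
  have pp: "partition p" using p'(1) apos age unfolding partition_def p_def by auto
  have "bset p = B"
  proof -
    have "bset p = beta p ` ({0} \<union> Suc ` {..<n})"
      unfolding bset_def p_def using lp' by (simp add: lessThan_Suc_eq_insert_0)
    also have "\<dots> = insert (beta p 0) ((\<lambda>i. beta p (Suc i)) ` {..<n})"
      by (simp add: image_image)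
    also have "beta p 0 = M" unfolding beta_def p_def a_def using lp' ha apos
      by (cases "n = 0") (auto simp: a_def)
    also have "(\<lambda>i. beta p (Suc i)) ` {..<n} = bset p'"
      unfolding bset_def beta_def p_def using lp' by auto
    finally show ?thesis using p'(2) MB unfolding B'_def by auto
  qed
  then show ?case using pp by blast
qed



definition F2 :: "nat \<Rightarrow> nat \<Rightarrow> (nat \<Rightarrow> int) \<Rightarrow> int" where
  "F2 s L n = (\<Sum>k<L. 2 * (int k + 1) * int s * n k - (n k)^2) - (\<Sum>k<L. n k)^2"

lemma sum_k: "2 * (\<Sum>k<L. int k) = int L * (int L - 1)"
  by (induction L) (auto simp: algebra_simps)

lemma sum_k2: "6 * (\<Sum>k<L. (int k)^2) = int L * (int L - 1) * (2 * int L - 1)"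
  by (induction L) (auto simp: algebra_simps power2_eq_square)

lemma F2_shift:
  "F2 s L (\<lambda>k. a k + b k) = F2 s L a
     + (\<Sum>k<L. (2 * (int k + 1) * int s - 2 * a k - 2 * (\<Sum>i<L. a i)) * b k)
     - (\<Sum>k<L. (b k)^2) - (\<Sum>k<L. b k)^2"
proof -
  let ?A = "\<Sum>i<L. a i" and ?B = "\<Sum>i<L. b i"
  have e1: "(\<Sum>k<L. a k + b k) = ?A + ?B" by (simp add: sum.distrib)
  have e2: "(\<Sum>k<L. 2 * (int k + 1) * int s * (a k + b k) - (a k + b k)^2)
      = (\<Sum>k<L. 2 * (int k + 1) * int s * a k - (a k)^2)
      + (\<Sum>k<L. (2 * (int k + 1) * int s - 2 * a k) * b k) - (\<Sum>k<L. (b k)^2)"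
    by (simp add: sum.distrib[symmetric] sum_subtractf[symmetric] power2_eq_square algebra_simps)
  have e3: "(\<Sum>k<L. (2 * (int k + 1) * int s - 2 * a k - 2 * ?A) * b k)
      = (\<Sum>k<L. (2 * (int k + 1) * int s - 2 * a k) * b k) - 2 * ?A * ?B"
  proof -
    have "(\<Sum>k<L. (2 * (int k + 1) * int s - 2 * a k - 2 * ?A) * b k)
       = (\<Sum>k<L. (2 * (int k + 1) * int s - 2 * a k) * b k - (2 * ?A) * b k)"
      by (rule sum.cong) (auto simp: left_diff_distrib)
    also have "\<dots> = (\<Sum>k<L. (2 * (int k + 1) * int s - 2 * a k) * b k) - (2 * ?A) * ?B"
      by (simp only: sum_subtractf sum_distrib_left)
    finally show ?thesis .
  qed
  show ?thesis unfolding F2_def e1 e2 e3 by (simp add: power2_eq_square algebra_simps)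
qed

definition tgt :: "nat \<Rightarrow> nat" where
  "tgt s = (if odd s then (let m = (s + 1) div 2 in m * ((m + 1) choose 3))
     else (let m = s div 2 in (m + 1) * ((m + 1) choose 3) + ((m + 2) choose 3)))"

lemma choose3: "6 * (n choose 3) = n * (n - 1) * (n - 2)"
proof (induction n)
  case (Suc n)
  have "Suc n choose Suc 2 = (n choose 2) + (n choose Suc 2)"
    by (rule binomial_Suc_Suc)
  then have "Suc n choose 3 = (n choose 2) + (n choose 3)"
    by (simp add: numeral_3_eq_3)
  moreover have "2 * (n choose 2) = n * (n - 1)"
  proof (induction n)
    case (Suc m)
    have "Suc m choose Suc 1 = (m choose 1) + (m choose Suc 1)" by (rule binomial_Suc_Suc)
    then have "Suc m choose 2 = m + (m choose 2)" by (simp add: numeral_2_eq_2)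
    then show ?case using Suc.IH by (cases m) (auto simp: algebra_simps)
  qed simp
  ultimately have "6 * (Suc n choose 3) = 3 * (n * (n - 1)) + n * (n - 1) * (n - 2)"
    using Suc.IH by simp
  also have "\<dots> = Suc n * (Suc n - 1) * (Suc n - 2)"
    by (cases n; cases "n - 1") (auto simp: algebra_simps)
  finally show ?case .
qed simp

lemma tgt6_odd:
  assumes "s = 2 * K + 1"
  shows "6 * int (tgt s) = (int K + 1) * (int K + 2) * (int K + 1) * int K"
proof -
  have m: "(s + 1) div 2 = K + 1" using assms by simp
  have "6 * tgt s = (K + 1) * (6 * (K + 2 choose 3))" using assms unfolding tgt_def m
    by (simp add: Let_def)
  also have "\<dots> = (K + 1) * ((K + 2) * (K + 1) * K)" by (simp add: choose3)
  finally have "6 * tgt s = (K + 1) * ((K + 2) * (K + 1) * K)" .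
  then have "int (6 * tgt s) = int ((K + 1) * ((K + 2) * (K + 1) * K))" by simp
  then show ?thesis by (simp add: algebra_simps)
qed

lemma tgt6_even:
  assumes "s = 2 * K"
  shows "6 * int (tgt s) = (int K + 1) * (int K + 1) * int K * (int K - 1) + (int K + 2) * (int K + 1) * int K"
proof -
  have m: "s div 2 = K" using assms by simp
  have ev: "\<not> odd s" using assms by simp
  have "6 * tgt s = (K + 1) * (6 * (K + 1 choose 3)) + 6 * (K + 2 choose 3)"
    using ev unfolding tgt_def m by (simp add: Let_def algebra_simps)
  also have "\<dots> = (K + 1) * ((K + 1) * K * (K - 1)) + (K + 2) * (K + 1) * K" by (simp add: choose3)
  finally have h: "6 * tgt s = (K + 1) * ((K + 1) * K * (K - 1)) + (K + 2) * (K + 1) * K" .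
  show ?thesis
  proof (cases K)
    case 0 then show ?thesis using h by simp
  next
    case (Suc K')
    then have "int (6 * tgt s) = int ((K + 1) * ((K + 1) * K * (K - 1)) + (K + 2) * (K + 1) * K)"
      using h by simp
    then show ?thesis using Suc by (simp add: algebra_simps of_nat_diff)
  qed
qed

lemma F2_center:
  "3 * F2 s L (\<lambda>k. int K + int L - 1 - 2 * int k)
   = int s * int L * (int L + 1) * (3 * int K - int L + 1) - 3 * int L * (int K)^2
     - int L * ((int L)^2 - 1) - 3 * (int L)^2 * (int K)^2"
proof -
  define A where "A = int K + int L - 1"
  define S1 where "S1 = (\<Sum>k<L. int k)"
  define S2 where "S2 = (\<Sum>k<L. (int k)^2)"
  have s1: "2 * S1 = int L * (int L - 1)" unfolding S1_def by (rule sum_k)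
  have s2: "6 * S2 = int L * (int L - 1) * (2 * int L - 1)" unfolding S2_def by (rule sum_k2)
  have h1: "(\<Sum>k<L. int K + int L - 1 - 2 * int k) = int L * A - 2 * S1"
    unfolding A_def S1_def by (simp add: sum_subtractf sum_distrib_left)
  have h2: "(\<Sum>k<L. 2 * (int k + 1) * int s * (int K + int L - 1 - 2 * int k) - (int K + int L - 1 - 2 * int k)^2)
     = (\<Sum>k<L. (2 * int s * A - A^2) + (2 * int s * (A - 2) + 4 * A) * int k - (4 * int s + 4) * (int k)^2)"
    by (rule sum.cong) (auto simp: A_def algebra_simps power2_eq_square)
  also have "\<dots> = (2 * int s * A - A^2) * int L + (2 * int s * (A - 2) + 4 * A) * S1 - (4 * int s + 4) * S2"
    unfolding S1_def S2_def by (simp add: sum.distrib sum_subtractf sum_distrib_left)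
  finally have h2' : "(\<Sum>k<L. 2 * (int k + 1) * int s * (int K + int L - 1 - 2 * int k) - (int K + int L - 1 - 2 * int k)^2)
     = (2 * int s * A - A^2) * int L + (2 * int s * (A - 2) + 4 * A) * S1 - (4 * int s + 4) * S2" .
  have "3 * F2 s L (\<lambda>k. int K + int L - 1 - 2 * int k)
     = 3 * ((2 * int s * A - A^2) * int L) + 3 * (int s * (A - 2) + 2 * A) * (2 * S1)
       - 2 * (int s + 1) * (6 * S2) - 3 * (int L * A - 2 * S1)^2"
    unfolding F2_def h2' h1 by (simp add: algebra_simps)
  also have "\<dots> = 3 * ((2 * int s * A - A^2) * int L) + 3 * (int s * (A - 2) + 2 * A) * (int L * (int L - 1))
       - 2 * (int s + 1) * (int L * (int L - 1) * (2 * int L - 1)) - 3 * (int L * A - int L * (int L - 1))^2"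
    unfolding s1 s2 by simp
  also have "\<dots> = int s * int L * (int L + 1) * (3 * int K - int L + 1) - 3 * int L * (int K)^2
     - int L * ((int L)^2 - 1) - 3 * (int L)^2 * (int K)^2"
    unfolding A_def by (simp add: algebra_simps power2_eq_square power3_eq_cube)
  finally show ?thesis .
qed

lemma center_le_tgt:
  assumes "L \<le> s div 2"
  shows "3 * F2 s L (\<lambda>k. int (s div 2) + int L - 1 - 2 * int k) \<le> 6 * int (tgt s)"
proof -
  define K where "K = s div 2"
  obtain j where j: "K = L + j" using assms unfolding K_def by (metis le_iff_add)
  show ?thesis
  proof (cases "odd s")
    case True
    then have s: "s = 2 * K + 1" unfolding K_def by presburger
    have "6 * int (tgt s) - 3 * F2 s L (\<lambda>k. int K + int L - 1 - 2 * int k)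
       = int (2*j + 5*j*L + 3*j*L^2 + 5*j^2 + 9*j^2*L + 3*j^2*L^2 + 4*j^3 + 4*j^3*L + j^4)"
      unfolding tgt6_odd[OF s] F2_center unfolding s j
      by (simp add: algebra_simps power2_eq_square power3_eq_cube power4_eq_xxxx)
    then show ?thesis unfolding K_def by linarith
  next
    case False
    then have s: "s = 2 * K" unfolding K_def by presburger
    have "6 * int (tgt s) - 3 * F2 s L (\<lambda>k. int K + int L - 1 - 2 * int k)
       = int (j + 2*j*L + 2*j^2 + 3*j^2*L + 3*j^2*L^2 + 2*j^3 + 4*j^3*L + j^4)"
      unfolding tgt6_even[OF s] F2_center unfolding s j
      by (simp add: algebra_simps power2_eq_square power3_eq_cube power4_eq_xxxx)
    then show ?thesis unfolding K_def by linarith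
  qed
qed



lemma pair_sum:
  fixes x :: "nat \<Rightarrow> int"
  shows "2 * (\<Sum>k<L. (int L - 1 - 2 * int k) * x k)
       = (\<Sum>k<L. (int L - 1 - 2 * int k) * (x k - x (L - 1 - k)))"
proof -
  have r: "(\<Sum>k<L. (int L - 1 - 2 * int k) * x (L - 1 - k))
         = (\<Sum>k<L. (int L - 1 - 2 * int (L - 1 - k)) * x k)"
    using sum.nat_diff_reindex[of "\<lambda>k. (int L - 1 - 2 * int (L - 1 - k)) * x k" L]
    by (auto intro!: sum.cong simp: of_nat_diff)
  have r2: "(\<Sum>k<L. (int L - 1 - 2 * int (L - 1 - k)) * x k)
         = - (\<Sum>k<L. (int L - 1 - 2 * int k) * x k)"
  proof -
    have "(\<Sum>k<L. (int L - 1 - 2 * int (L - 1 - k)) * x k)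
        = (\<Sum>k<L. - ((int L - 1 - 2 * int k) * x k))"
      by (rule sum.cong) (auto simp: of_nat_diff algebra_simps)
    then show ?thesis by (simp add: sum_negf)
  qed
  have "(\<Sum>k<L. (int L - 1 - 2 * int k) * (x k - x (L - 1 - k)))
     = (\<Sum>k<L. (int L - 1 - 2 * int k) * x k) - (\<Sum>k<L. (int L - 1 - 2 * int k) * x (L - 1 - k))"
    by (simp only: right_diff_distrib sum_subtractf)
  then show ?thesis using r r2 by linarith
qed

lemma F_bound:
  fixes s L :: nat and n :: "nat \<Rightarrow> int"
  assumes pos: "\<And>k. k < L \<Longrightarrow> 1 \<le> n k"
    and top: "0 < L \<Longrightarrow> n 0 \<le> int s - 1"
    and dec: "\<And>k. Suc k < L \<Longrightarrow> n (Suc k) + 2 \<le> n k"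
  shows "F2 s L n \<le> 2 * int (tgt s)"
proof (cases "L = 0")
  case True
  then show ?thesis unfolding F2_def by simp
next
  case False
  then have L0: "0 < L" by simp
  define K where "K = s div 2"
  define e where "e = int (s mod 2)"
  have "s = 2 * K + s mod 2" unfolding K_def by simp
  then have se: "int s = 2 * int K + e" unfolding e_def by (metis of_nat_add of_nat_mult of_nat_numeral)
  have e01: "e = 0 \<or> e = 1" unfolding e_def by auto
  have ndec: "k < L \<Longrightarrow> n k + 2 * int k \<le> n 0" for k
  proof (induction k)
    case (Suc k)
    then show ?case using dec[of k] by simp
  qed simp
  have "n (L - 1) + 2 * int (L - 1) \<le> n 0" using ndec[of "L - 1"] L0 by simp
  then have "1 + 2 * int (L - 1) \<le> int s - 1" using pos[of "L - 1"] top[OF L0] L0 by simp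
  then have LK: "L \<le> K" unfolding K_def using L0 by (simp add: of_nat_diff)
  define n' where "n' = (\<lambda>k. int K + int L - 1 - 2 * int k)"
  define x where "x = (\<lambda>k. n k - n' k)"
  have nx: "n = (\<lambda>k. n' k + x k)" unfolding x_def by auto
  have sn': "(\<Sum>i<L. n' i) = int L * int K"
  proof -
    have "(\<Sum>i<L. n' i) = (\<Sum>i<L. (int K + int L - 1) - 2 * int i)" unfolding n'_def by simp
    also have "\<dots> = int L * (int K + int L - 1) - 2 * (\<Sum>i<L. int i)"
      by (simp add: sum_subtractf sum_distrib_left)
    also have "\<dots> = int L * (int K + int L - 1) - int L * (int L - 1)" by (simp only: sum_k)
    also have "\<dots> = int L * int K" by (simp add: algebra_simps)
    finally show ?thesis .
  qed
  define C where "C = (\<Sum>k<L. (int L - 1 - 2 * int k) * x k)"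
  define X where "X = (\<Sum>k<L. x k)"
  have coef: "2 * (int k + 1) * int s - 2 * n' k - 2 * (\<Sum>i<L. n' i)
      = - (int s + 2) * (int L - 1 - 2 * int k) + e * (int L + 1)" for k
    unfolding sn' by (simp add: n'_def se algebra_simps)
  have lin: "(\<Sum>k<L. (2 * (int k + 1) * int s - 2 * n' k - 2 * (\<Sum>i<L. n' i)) * x k)
      = - (int s + 2) * C + e * (int L + 1) * X"
  proof -
    have "(\<Sum>k<L. (2 * (int k + 1) * int s - 2 * n' k - 2 * (\<Sum>i<L. n' i)) * x k)
      = (\<Sum>k<L. (- (int s + 2)) * ((int L - 1 - 2 * int k) * x k) + (e * (int L + 1)) * x k)"
      unfolding coef by (rule sum.cong) (auto simp: algebra_simps)
    also have "\<dots> = (- (int s + 2)) * C + (e * (int L + 1)) * X"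
      unfolding C_def X_def by (simp only: sum.distrib sum_distrib_left)
    finally show ?thesis by simp
  qed
  have main: "F2 s L n = F2 s L n' + (- (int s + 2) * C + e * (int L + 1) * X)
      - (\<Sum>k<L. (x k)^2) - X^2"
    unfolding nx F2_shift lin X_def by simp
  have xmono1: "x (Suc k) \<le> x k" if "Suc k < L" for k
    using dec[OF that] unfolding x_def n'_def by simp
  have xmono: "x j \<le> x i" if "i \<le> j" "j < L" for i j
    using that
  proof (induction j)
    case 0 then show ?case by simp
  next
    case (Suc j)
    show ?case
    proof (cases "i = Suc j")
      case False
      then have "x j \<le> x i" using Suc by simp
      then show ?thesis using xmono1[OF Suc.prems(2)] by simp
    qed simp
  qed
  have terms: "0 \<le> (int L - 1 - 2 * int k) * (x k - x (L - 1 - k))" if "k < L" for k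
  proof (cases "2 * k \<le> L - 1")
    case True
    then have "x (L - 1 - k) \<le> x k" using that by (intro xmono) auto
    moreover have "0 \<le> int L - 1 - 2 * int k" using True that by linarith
    ultimately show ?thesis by simp
  next
    case False
    then have "x k \<le> x (L - 1 - k)" using that by (intro xmono) auto
    moreover have "int L - 1 - 2 * int k \<le> 0" using False that by linarith
    ultimately show ?thesis by (simp add: mult_nonpos_nonpos)
  qed
  have C2: "2 * C = (\<Sum>k<L. (int L - 1 - 2 * int k) * (x k - x (L - 1 - k)))"
    unfolding C_def by (rule pair_sum)
  have Cnn: "0 \<le> C" using C2 terms by (smt (verit) lessThan_iff sum_nonneg)
  have psi: "- (int s + 2) * C + e * (int L + 1) * X - (\<Sum>k<L. (x k)^2) - X^2 \<le> 0"
  proof (cases "e = 0")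
    case True
    have "- (int s + 2) * C \<le> 0" using Cnn by (simp add: mult_nonpos_nonneg)
    moreover have "0 \<le> (\<Sum>k<L. (x k)^2)" by (simp add: sum_nonneg)
    moreover have "0 \<le> X^2" by simp
    moreover have "e * (int L + 1) * X = 0" using True by simp
    ultimately show ?thesis by linarith
  next
    case False
    then have e1: "e = 1" using e01 by simp
    have sq: "0 \<le> (\<Sum>k<L. (x k)^2)" by (simp add: sum_nonneg)
    show ?thesis
    proof (cases "x (L - 1) = x 0")
      case True
      have xc: "x k = x 0" if kL: "k < L" for k
      proof -
        have "x k \<le> x 0" using kL by (intro xmono) auto
        moreover have "x (L - 1) \<le> x k" using kL by (intro xmono) auto
        ultimately show ?thesis using True by simp
      qed
      have "X = (\<Sum>k<L. x 0)" unfolding X_def by (rule sum.cong[OF refl]) (rule xc, simp)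
      then have X1: "X = int L * x 0" by simp
      have "(\<Sum>k<L. (x k)^2) = (\<Sum>k<L. (x 0)^2)" by (rule sum.cong[OF refl]) (subst xc, auto)
      then have X2: "(\<Sum>k<L. (x k)^2) = int L * (x 0)^2" by simp
      have Cz: "C = 0"
      proof -
        have "2 * C = 0" unfolding C2
        proof (rule sum.neutral, rule ballI)
          fix k assume "k \<in> {..<L}"
          then have kk: "k < L" "L - 1 - k < L" by auto
          have "x k = x 0" by (rule xc[OF kk(1)])
          moreover have "x (L - 1 - k) = x 0" by (rule xc[OF kk(2)])
          ultimately have "x k = x 0 \<and> x (L - 1 - k) = x 0" by blast
          then have "x k = x 0" "x (L - 1 - k) = x 0" by auto
          then show "(int L - 1 - 2 * int k) * (x k - x (L - 1 - k)) = 0" by simp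
        qed
        then show ?thesis by simp
      qed
      have "x 0 * (1 - x 0) \<le> 0"
      proof (cases "x 0 \<le> 0")
        case True
        then show ?thesis by (intro mult_nonpos_nonneg) auto
      next
        case False
        then show ?thesis by (intro mult_nonneg_nonpos) auto
      qed
      then have "int L * (int L + 1) * (x 0 * (1 - x 0)) \<le> 0"
        by (simp add: mult_nonneg_nonpos)
      then show ?thesis unfolding Cz X1 X2 e1 by (simp add: algebra_simps power2_eq_square)
    next
      case False
      then have xlt: "x (L - 1) < x 0" using xmono[of 0 "L - 1"] L0 by force
      then have L2: "2 \<le> L" using L0 by (cases "L = 1") auto
      have "(\<Sum>k\<in>{0, L - 1}. (int L - 1 - 2 * int k) * (x k - x (L - 1 - k)))
          \<le> (\<Sum>k<L. (int L - 1 - 2 * int k) * (x k - x (L - 1 - k)))"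
        by (rule sum_mono2) (use L0 terms in auto)
      moreover have "(\<Sum>k\<in>{0, L - 1}. (int L - 1 - 2 * int k) * (x k - x (L - 1 - k)))
          = 2 * ((int L - 1) * (x 0 - x (L - 1)))"
        using L2 by (simp add: of_nat_diff algebra_simps)
      ultimately have "(int L - 1) * (x 0 - x (L - 1)) \<le> C" using C2 by linarith
      moreover have "int L - 1 \<le> (int L - 1) * (x 0 - x (L - 1))"
        using xlt L2 by (simp add: mult_le_cancel_left1)
      ultimately have CL: "int L - 1 \<le> C" by linarith
      have sbig: "2 * int L + 3 \<le> int s + 2" using LK se e1 by linarith
      define A where "A = (int L + 1) * X"
      define Q where "Q = (int L + 1)^2"
      define P where "P = (int s + 2) * C"
      define R where "R = (2 * int L + 3) * (int L - 1)"
      have q: "4 * (A - X^2) \<le> Q"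
        using zero_le_square[of "int L + 1 - 2 * X"] unfolding A_def Q_def
        by (simp add: power2_eq_square algebra_simps)
      have RP: "R \<le> P"
        unfolding R_def P_def using mult_mono[OF sbig CL] L2 Cnn by simp
      have L4: "4 \<le> int L * int L" using mult_mono[of 2 "int L" 2 "int L"] L2 by simp
      have QR: "Q \<le> 4 * R" unfolding Q_def R_def using L4
        by (simp add: power2_eq_square algebra_simps)
      have eq: "- (int s + 2) * C + e * (int L + 1) * X - (\<Sum>k<L. (x k)^2) - X^2
          = A - X^2 - (\<Sum>k<L. (x k)^2) - P"
        unfolding A_def P_def e1 by (simp add: algebra_simps)
      show ?thesis unfolding eq using q RP QR sq by (smt (verit))
    qed
  qed
  have "F2 s L n \<le> F2 s L n'" using main psi by linarith
  also have "3 * F2 s L n' \<le> 6 * int (tgt s)"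
    using center_le_tgt[of L s] LK unfolding n'_def K_def by simp
  then have "F2 s L n' \<le> 2 * int (tgt s)" by simp
  finally show ?thesis .
qed



lemma set_sum_bound:
  "finite A \<Longrightarrow> A \<subseteq> {..<s} \<Longrightarrow>
     2 * int (sum id A) \<le> int (card A) * (2 * int s - 1 - int (card A))"
proof (induction s arbitrary: A)
  case 0 then show ?case by simp
next
  case (Suc s)
  show ?case
  proof (cases "s \<in> A")
    case True
    define A' where "A' = A - {s}"
    have A': "finite A'" "A' \<subseteq> {..<s}" using Suc.prems unfolding A'_def by auto
    have IH: "2 * int (sum id A') \<le> int (card A') * (2 * int s - 1 - int (card A'))"
      by (rule Suc.IH[OF A'])
    have cA: "card A = Suc (card A')" using card.remove[OF Suc.prems(1) True] unfolding A'_def .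
    have sA: "sum id A = s + sum id A'" using True Suc.prems(1) unfolding A'_def
      by (simp add: sum.remove)
    show ?thesis using IH unfolding cA sA by (simp add: algebra_simps)
  next
    case False
    then have "A \<subseteq> {..<s}" using Suc.prems(2) by (auto simp: less_Suc_eq)
    then have IH: "2 * int (sum id A) \<le> int (card A) * (2 * int s - 1 - int (card A))"
      by (rule Suc.IH[OF Suc.prems(1)])
    have "int (card A) * (2 * int s - 1 - int (card A)) \<le> int (card A) * (2 * int (Suc s) - 1 - int (card A))"
      by (intro mult_left_mono) auto
    then show ?thesis using IH by linarith
  qed
qed

lemma sum_interval2: "a \<le> s \<Longrightarrow> 2 * int (sum id {a..<s}) = int (s - a) * (2 * int s - 1 - int (s - a))"
proof (induction s)
  case 0 then show ?case by simp
next
  case (Suc s)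
  show ?case
  proof (cases "a = Suc s")
    case True then show ?thesis by simp
  next
    case False
    then have as: "a \<le> s" using Suc.prems by simp
    have "sum id {a..<Suc s} = sum id {a..<s} + s" using as by simp
    then show ?thesis using Suc.IH[OF as] as by (simp add: of_nat_diff algebra_simps)
  qed
qed

definition Lv :: "nat set \<Rightarrow> nat \<Rightarrow> nat \<Rightarrow> nat set" where
  "Lv B s k = {r. r < s \<and> k * s + r \<in> B}"

lemma decomp:
  assumes fin: "finite B" and s: "0 < s" and emp: "\<And>k. L \<le> k \<Longrightarrow> Lv B s k = {}"
  shows "sum id B = (\<Sum>k<L. k * s * card (Lv B s k) + sum id (Lv B s k))"
    and "card B = (\<Sum>k<L. card (Lv B s k))"
proof -
  define f where "f = (\<lambda>(k, r). k * s + r)"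
  define S where "S = (SIGMA k:{..<L}. Lv B s k)"
  have finLv: "finite (Lv B s k)" for k unfolding Lv_def by auto
  have finS: "finite S" unfolding S_def using finLv by auto
  have inj: "inj_on f S"
  proof (rule inj_onI)
    fix p q assume pq0: "p \<in> S" "q \<in> S" "f p = f q"
    obtain k r where p: "p = (k, r)" by (cases p)
    obtain k' r' where q: "q = (k', r')" by (cases q)
    have pq: "p = (k, r)" "q = (k', r')" "r < s" "r' < s" "k * s + r = k' * s + r'"
      using pq0 p q unfolding S_def f_def Lv_def by auto
    have "k = (k * s + r) div s" using s pq(3) by simp
    also have "\<dots> = (k' * s + r') div s" by (simp only: pq(5))
    also have "\<dots> = k'" using s pq(4) by simp
    finally have "k = k'" .
    then show "p = q" using pq by simp
  qed
  have img: "f ` S = B"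
  proof
    show "f ` S \<subseteq> B" unfolding S_def f_def Lv_def by auto
    show "B \<subseteq> f ` S"
    proof
      fix b assume b: "b \<in> B"
      have r: "b mod s \<in> Lv B s (b div s)" using b s unfolding Lv_def by auto
      then have "b div s < L" using emp[of "b div s"] by (metis empty_iff not_le)
      then have "(b div s, b mod s) \<in> S" using r unfolding S_def by auto
      moreover have "f (b div s, b mod s) = b" unfolding f_def by simp
      ultimately show "b \<in> f ` S" by force
    qed
  qed
  have "sum id B = sum (id \<circ> f) S" using sum.reindex[OF inj, of id] img by simp
  also have "\<dots> = (\<Sum>(k, r)\<in>S. k * s + r)"
    unfolding f_def by (rule sum.cong) auto
  also have "\<dots> = (\<Sum>k<L. \<Sum>r\<in>Lv B s k. k * s + r)"
    unfolding S_def by (rule sum.Sigma[symmetric]) (auto simp: finLv)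
  also have "\<dots> = (\<Sum>k<L. k * s * card (Lv B s k) + sum id (Lv B s k))"
    by (simp add: sum.distrib mult.commute)
  finally show "sum id B = (\<Sum>k<L. k * s * card (Lv B s k) + sum id (Lv B s k))" .
  have "card B = card S" using card_image[OF inj] img by simp
  also have "\<dots> = (\<Sum>k<L. card (Lv B s k))" unfolding S_def by (simp add: card_SigmaI finLv)
  finally show "card B = (\<Sum>k<L. card (Lv B s k))" .
qed



lemma full_val:
  "3 * F2 s (s div 2) (\<lambda>k. int s - 1 - 2 * int k) = 6 * int (tgt s)"
proof -
  define K where "K = s div 2"
  show ?thesis
  proof (cases "odd s")
    case True
    then have s: "s = 2 * K + 1" unfolding K_def by presburger
    have f: "(\<lambda>k. int s - 1 - 2 * int k) = (\<lambda>k. int (K + 1) + int K - 1 - 2 * int k)"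
      using s by auto
    show ?thesis unfolding K_def[symmetric] f F2_center tgt6_odd[OF s]
      unfolding s by (simp add: algebra_simps power2_eq_square)
  next
    case False
    then have s: "s = 2 * K" unfolding K_def by presburger
    have f: "(\<lambda>k. int s - 1 - 2 * int k) = (\<lambda>k. int K + int K - 1 - 2 * int k)"
      using s by auto
    show ?thesis unfolding K_def[symmetric] f F2_center tgt6_even[OF s]
      unfolding s by (simp add: algebra_simps power2_eq_square)
  qed
qed

lemma level_identity:
  fixes m :: "nat \<Rightarrow> int"
  shows "(\<Sum>k<L. 2 * (int k * int s * m k) + m k * (2 * int s - 1 - m k))
       - (\<Sum>k<L. m k) * ((\<Sum>k<L. m k) - 1) = F2 s L m"
proof -
  have "(\<Sum>k<L. 2 * (int k * int s * m k) + m k * (2 * int s - 1 - m k))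
     = (\<Sum>k<L. (2 * (int k + 1) * int s * m k - (m k)^2) - m k)"
    by (rule sum.cong) (auto simp: algebra_simps power2_eq_square)
  also have "\<dots> = (\<Sum>k<L. 2 * (int k + 1) * int s * m k - (m k)^2) - (\<Sum>k<L. m k)"
    by (simp only: sum_subtractf)
  finally show ?thesis unfolding F2_def by (simp add: algebra_simps power2_eq_square)
qed

lemma closed_bound:
  assumes fin: "finite B" and z: "0 \<notin> B" and s: "0 < s"
    and c0: "\<And>b. b \<in> B \<Longrightarrow> s \<le> b \<Longrightarrow> b - s \<in> B"
    and c1: "\<And>b. b \<in> B \<Longrightarrow> s + 1 \<le> b \<Longrightarrow> b - (s + 1) \<in> B"
    and c2: "\<And>b. b \<in> B \<Longrightarrow> s + 2 \<le> b \<Longrightarrow> b - (s + 2) \<in> B"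
  shows "2 * int (sum id B) - int (card B) * (int (card B) - 1) \<le> 2 * int (tgt s)"
proof -
  let ?V = "Lv B s"
  have finV: "finite (?V k)" for k unfolding Lv_def by auto
  have gap: "r \<in> ?V k \<Longrightarrow> 2 * k + 1 \<le> r" for k r
  proof (induction k arbitrary: r)
    case 0
    then show ?case using z unfolding Lv_def by (cases r) auto
  next
    case (Suc k)
    then have r: "r < s" "Suc k * s + r \<in> B" unfolding Lv_def by auto
    have l0: "s \<le> Suc k * s + r" by simp
    have "Suc k * s + r - s \<in> B" using c0[OF r(2) l0] .
    then have "k * s + r \<in> B" by simp
    then have "r \<in> ?V k" using r unfolding Lv_def by simp
    then have r1: "2 * k + 1 \<le> r" by (rule Suc.IH)
    have l1: "s + 1 \<le> Suc k * s + r" using r1 by simp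
    have e1: "Suc k * s + r - (s + 1) = k * s + (r - 1)" using r1 by simp
    have "k * s + (r - 1) \<in> B" using c1[OF r(2) l1] unfolding e1 .
    then have "r - 1 \<in> ?V k" using r unfolding Lv_def by simp
    then have r2: "2 * k + 1 \<le> r - 1" by (rule Suc.IH)
    have l2: "s + 2 \<le> Suc k * s + r" using r2 by simp
    have e2: "Suc k * s + r - (s + 2) = k * s + (r - 2)" using r2 by simp
    have "k * s + (r - 2) \<in> B" using c2[OF r(2) l2] unfolding e2 .
    then have "r - 2 \<in> ?V k" using r unfolding Lv_def by simp
    then have "2 * k + 1 \<le> r - 2" by (rule Suc.IH)
    then show ?case by simp
  qed
  have down: "r \<in> ?V k \<and> r - 1 \<in> ?V k \<and> r - 2 \<in> ?V k" if rv: "r \<in> ?V (Suc k)" for k r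
  proof -
    have g: "2 * Suc k + 1 \<le> r" by (rule gap[OF rv])
    have r: "r < s" "Suc k * s + r \<in> B" using rv unfolding Lv_def by auto
    have e0: "Suc k * s + r - s = k * s + r" by simp
    have l0: "s \<le> Suc k * s + r" by simp
    have a: "k * s + r \<in> B" using c0[OF r(2) l0] unfolding e0 .
    have e1: "Suc k * s + r - (s + 1) = k * s + (r - 1)" using g by simp
    have l1: "s + 1 \<le> Suc k * s + r" using g by simp
    have b: "k * s + (r - 1) \<in> B" using c1[OF r(2) l1] unfolding e1 .
    have e2: "Suc k * s + r - (s + 2) = k * s + (r - 2)" using g by simp
    have l2: "s + 2 \<le> Suc k * s + r" using g by simp
    have c: "k * s + (r - 2) \<in> B" using c2[OF r(2) l2] unfolding e2 .
    show ?thesis using a b c r unfolding Lv_def by auto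
  qed
  have step: "card (?V (Suc k)) + 2 \<le> card (?V k)" if ne: "?V (Suc k) \<noteq> {}" for k
  proof -
    define r0 where "r0 = Min (?V (Suc k))"
    have r0in: "r0 \<in> ?V (Suc k)" unfolding r0_def using Min_in[OF finV ne] .
    have g: "2 * Suc k + 1 \<le> r0" by (rule gap[OF r0in])
    have sub: "?V (Suc k) \<subseteq> ?V k - {r0 - 1, r0 - 2}"
    proof
      fix r assume rv: "r \<in> ?V (Suc k)"
      have "r0 \<le> r" unfolding r0_def using Min_le[OF finV rv] .
      then show "r \<in> ?V k - {r0 - 1, r0 - 2}" using down[OF rv] g by auto
    qed
    have two: "{r0 - 1, r0 - 2} \<subseteq> ?V k" using down[OF r0in] by auto
    have ctwo: "card {r0 - 1, r0 - 2} = 2" using g by simp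
    have "card (?V (Suc k)) \<le> card (?V k - {r0 - 1, r0 - 2})"
      by (rule card_mono) (use finV sub in auto)
    also have "\<dots> = card (?V k) - 2" using card_Diff_subset[OF _ two] ctwo by simp
    finally show ?thesis using card_mono[OF finV two] ctwo by linarith
  qed
  have nedown: "?V k \<noteq> {}" if "?V (Suc k) \<noteq> {}" for k
    using down that by blast
  define M where "M = Suc (sum id B)"
  have VM: "?V M = {}"
  proof -
    have "b \<le> sum id B" if "b \<in> B" for b
      using member_le_sum[OF that, of id] fin by simp
    moreover have "M \<le> M * s" using s by simp
    ultimately show ?thesis unfolding Lv_def M_def by fastforce
  qed
  define L where "L = (LEAST k. ?V k = {})"
  have VL: "?V L = {}" unfolding L_def by (rule LeastI[of _ M]) (rule VM)
  have emp: "?V k = {}" if "L \<le> k" for k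
    using that
  proof (induction k rule: dec_induct)
    case base then show ?case by (rule VL)
  next
    case (step k) then show ?case using nedown by blast
  qed
  have nemp: "?V k \<noteq> {}" if "k < L" for k
    using not_less_Least[of k "\<lambda>k. ?V k = {}"] that unfolding L_def by blast
  define n where "n = (\<lambda>k. int (card (?V k)))"
  have pos: "1 \<le> n k" if "k < L" for k
    using nemp[OF that] finV[of k] unfolding n_def by (simp add: Suc_le_eq card_gt_0_iff)
  have top: "n 0 \<le> int s - 1"
  proof -
    have "?V 0 \<subseteq> {1..<s}" using z unfolding Lv_def by (auto simp: Suc_le_eq intro: Nat.gr0I)
    then have "card (?V 0) \<le> s - 1" using card_mono[of "{1..<s}" "?V 0"] by simp
    then show ?thesis unfolding n_def using s by linarith
  qed
  have dec: "n (Suc k) + 2 \<le> n k" if "Suc k < L" for k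
    using step[OF nemp[OF that]] unfolding n_def by linarith
  have FB: "F2 s L n \<le> 2 * int (tgt s)" by (rule F_bound[OF pos top dec])
  have sB: "sum id B = (\<Sum>k<L. k * s * card (?V k) + sum id (?V k))"
    and cB: "card B = (\<Sum>k<L. card (?V k))" using decomp[OF fin s emp] by auto
  have "2 * int (sum id B) = (\<Sum>k<L. 2 * (int k * int s * n k) + 2 * int (sum id (?V k)))"
    unfolding sB n_def by (simp add: sum_distrib_left algebra_simps)
  also have "\<dots> \<le> (\<Sum>k<L. 2 * (int k * int s * n k) + n k * (2 * int s - 1 - n k))"
  proof (rule sum_mono)
    fix k assume "k \<in> {..<L}"
    have "?V k \<subseteq> {..<s}" unfolding Lv_def by auto
    then have "2 * int (sum id (?V k)) \<le> n k * (2 * int s - 1 - n k)"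
      unfolding n_def by (rule set_sum_bound[OF finV])
    then show "2 * (int k * int s * n k) + 2 * int (sum id (?V k))
        \<le> 2 * (int k * int s * n k) + n k * (2 * int s - 1 - n k)" by simp
  qed
  finally have h: "2 * int (sum id B) \<le> (\<Sum>k<L. 2 * (int k * int s * n k) + n k * (2 * int s - 1 - n k))" .
  have cN: "int (card B) = (\<Sum>k<L. n k)" unfolding cB n_def by simp
  have "2 * int (sum id B) - int (card B) * (int (card B) - 1) \<le> F2 s L n"
    using h level_identity[where L=L and s=s and m=n] unfolding cN by linarith
  then show ?thesis using FB by linarith
qed



definition PB :: "nat \<Rightarrow> nat set" where
  "PB s = {k * s + r | k r. 2 * k + 1 \<le> r \<and> r < s}"

lemma uniq_divmod:
  assumes "k * s + r = k' * s + r'" "r < s" "r' < (s::nat)"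
  shows "k = k' \<and> r = r'"
proof -
  have "k = (k * s + r) div s" using assms(2) by simp
  also have "\<dots> = (k' * s + r') div s" by (simp only: assms(1))
  also have "\<dots> = k'" using assms(3) by simp
  finally have "k = k'" .
  then show ?thesis using assms(1) by simp
qed

lemma PB_fin: "finite (PB s)"
proof (rule finite_subset[of _ "{..<s * s}"])
  show "PB s \<subseteq> {..<s * s}"
  proof
    fix b assume "b \<in> PB s"
    then obtain k r where b: "b = k * s + r" "2 * k + 1 \<le> r" "r < s" unfolding PB_def by auto
    then have "Suc k \<le> s" by simp
    then have "Suc k * s \<le> s * s" by (rule mult_le_mono1)
    then show "b \<in> {..<s * s}" using b by simp
  qed
qed simp

lemma PB_zero: "0 \<notin> PB s" unfolding PB_def by auto

lemma PB_closed:
  assumes b: "b \<in> PB s" and t: "t \<in> {s, s + 1, s + 2}" and le: "t \<le> b"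
  shows "b - t \<in> PB s"
proof -
  obtain k r where kr: "b = k * s + r" "2 * k + 1 \<le> r" "r < s" using b unfolding PB_def by auto
  have k0: "k \<noteq> 0"
  proof
    assume "k = 0"
    then have "b < s" using kr by simp
    then show False using le t by auto
  qed
  then obtain k' where k': "k = Suc k'" by (cases k) auto
  have "b - t = k' * s + (r - (t - s))" using kr k' t by auto
  moreover have "2 * k' + 1 \<le> r - (t - s)" "r - (t - s) < s" using kr k' t by auto
  ultimately show ?thesis unfolding PB_def by blast
qed

lemma Lv_PB: "Lv (PB s) s k = {2 * k + 1..<s}"
proof
  show "Lv (PB s) s k \<subseteq> {2 * k + 1..<s}"
  proof
    fix r assume "r \<in> Lv (PB s) s k"
    then obtain k' r' where kr: "r < s" "k * s + r = k' * s + r'" "2 * k' + 1 \<le> r'" "r' < s"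
      unfolding Lv_def PB_def by auto
    have "k = k' \<and> r = r'" by (rule uniq_divmod[OF kr(2) kr(1) kr(4)])
    then show "r \<in> {2 * k + 1..<s}" using kr by simp
  qed
  show "{2 * k + 1..<s} \<subseteq> Lv (PB s) s k"
  proof
    fix r assume "r \<in> {2 * k + 1..<s}"
    then have "r < s" "k * s + r = k * s + r \<and> 2 * k + 1 \<le> r \<and> r < s" by auto
    then show "r \<in> Lv (PB s) s k" unfolding Lv_def PB_def by blast
  qed
qed

lemma F2_cong:
  assumes "\<And>k. k < L \<Longrightarrow> m k = m' k"
  shows "F2 s L m = F2 s L m'"
proof -
  have a: "(\<Sum>k<L. m k) = (\<Sum>k<L. m' k)" by (rule sum.cong) (auto simp: assms)
  have b: "(\<Sum>k<L. 2 * (int k + 1) * int s * m k - (m k)^2) = (\<Sum>k<L. 2 * (int k + 1) * int s * m' k - (m' k)^2)"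
    by (rule sum.cong) (auto simp: assms)
  show ?thesis unfolding F2_def a b ..
qed

lemma PB_val:
  assumes s: "0 < s"
  shows "2 * int (sum id (PB s)) - int (card (PB s)) * (int (card (PB s)) - 1) = 2 * int (tgt s)"
proof -
  define K where "K = s div 2"
  have emp: "Lv (PB s) s k = {}" if "K \<le> k" for k
    using that unfolding Lv_PB K_def by auto
  have sB: "sum id (PB s) = (\<Sum>k<K. k * s * card (Lv (PB s) s k) + sum id (Lv (PB s) s k))"
    and cB: "card (PB s) = (\<Sum>k<K. card (Lv (PB s) s k))" using decomp[OF PB_fin s emp] by auto
  define m where "m = (\<lambda>k. int (card (Lv (PB s) s k)))"
  have "2 * int (sum id (PB s)) = (\<Sum>k<K. 2 * (int k * int s * m k) + 2 * int (sum id (Lv (PB s) s k)))"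
    unfolding sB m_def by (simp add: sum_distrib_left algebra_simps)
  also have "\<dots> = (\<Sum>k<K. 2 * (int k * int s * m k) + m k * (2 * int s - 1 - m k))"
  proof (rule sum.cong[OF refl])
    fix k assume "k \<in> {..<K}"
    then have "2 * k + 1 \<le> s" unfolding K_def by auto
    then have "2 * int (sum id {2 * k + 1..<s}) = int (s - (2 * k + 1)) * (2 * int s - 1 - int (s - (2 * k + 1)))"
      by (rule sum_interval2)
    then show "2 * (int k * int s * m k) + 2 * int (sum id (Lv (PB s) s k))
        = 2 * (int k * int s * m k) + m k * (2 * int s - 1 - m k)"
      unfolding m_def Lv_PB by simp
  qed
  finally have h: "2 * int (sum id (PB s)) = (\<Sum>k<K. 2 * (int k * int s * m k) + m k * (2 * int s - 1 - m k))" .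
  have cN: "int (card (PB s)) = (\<Sum>k<K. m k)" unfolding cB m_def by simp
  have "F2 s K m = F2 s K (\<lambda>k. int s - 1 - 2 * int k)"
  proof (rule F2_cong)
    fix k assume "k < K"
    then have "2 * k + 1 \<le> s" unfolding K_def by auto
    then show "m k = int s - 1 - 2 * int k" unfolding m_def Lv_PB by (simp add: of_nat_diff)
  qed
  moreover have "3 * F2 s K (\<lambda>k. int s - 1 - 2 * int k) = 6 * int (tgt s)"
    unfolding K_def by (rule full_val)
  ultimately have F2eq: "F2 s K m = 2 * int (tgt s)" by simp
  have "2 * int (sum id (PB s)) - int (card (PB s)) * (int (card (PB s)) - 1) = F2 s K m"
    unfolding cN h by (rule level_identity)
  then show ?thesis using F2eq by simp
qed

theorem corollary3p5:
  fixes s :: nat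
  assumes "0 < s"
  shows "is_max_triple_core_size s
    (if odd s then (let m = (s + 1) div 2 in m * ((m + 1) choose 3))
     else (let m = s div 2 in (m + 1) * ((m + 1) choose 3) + ((m + 2) choose 3)))"
proof -
  note tdef = tgt_def[symmetric, of s]
  have size_rel: "2 * int (psize p) = 2 * int (sum id (bset p)) - int (card (bset p)) * (int (card (bset p)) - 1)"
    if "partition p" for p
  proof -
    have a: "sum id (bset p) = psize p + (\<Sum>i<length p. i)" by (rule sum_bset[OF that])
    have c: "card (bset p) = length p" by (rule card_bset[OF that])
    have d: "int (\<Sum>i<length p. i) = (\<Sum>i<length p. int i)" by simp
    show ?thesis unfolding c a using sum_k[of "length p"] d by simp
  qed
  have ex: "\<exists>p. is_s_triple_core s p \<and> psize p = tgt s"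
  proof -
    obtain p where p: "partition p" "bset p = PB s" using exists_part[OF PB_fin PB_zero] by blast
    have core: "is_core t p" if tin: "t \<in> {s, s + 1, s + 2}" for t
    proof (rule closed_core[OF p(1)])
      show "0 < t" using tin assms by auto
      show "b - t \<in> bset p" if bin: "b \<in> bset p" and tb: "t \<le> b" for b
      proof -
        have "b \<in> PB s" using bin p(2) by simp
        then have "b - t \<in> PB s" by (rule PB_closed[OF _ tin tb])
        then show ?thesis using p(2) by simp
      qed
    qed
    have "2 * int (psize p) = 2 * int (tgt s)" using size_rel[OF p(1)] PB_val[OF assms] p(2) by simp
    then have "psize p = tgt s" by simp
    moreover have "is_core s p" "is_core (s + 1) p" "is_core (s + 2) p" by (rule core, simp)+
    ultimately show ?thesis using p(1) unfolding is_s_triple_core_def by blast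
  qed
  have ub: "psize p \<le> tgt s" if "is_s_triple_core s p" for p
  proof -
    have pp: "partition p" and cs: "is_core s p" "is_core (s + 1) p" "is_core (s + 2) p"
      using that unfolding is_s_triple_core_def by auto
    have fin: "finite (bset p)" unfolding bset_def by simp
    have "2 * int (sum id (bset p)) - int (card (bset p)) * (int (card (bset p)) - 1) \<le> 2 * int (tgt s)"
    proof (rule closed_bound[OF fin zero_notin_bset[OF pp] assms])
      show "b - s \<in> bset p" if "b \<in> bset p" "s \<le> b" for b
        by (rule core_closed[OF pp cs(1) assms that])
      show "b - (s + 1) \<in> bset p" if "b \<in> bset p" "s + 1 \<le> b" for b
        by (rule core_closed[OF pp cs(2) _ that]) simp
      show "b - (s + 2) \<in> bset p" if "b \<in> bset p" "s + 2 \<le> b" for b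
        by (rule core_closed[OF pp cs(3) _ that]) simp
    qed
    then have "2 * int (psize p) \<le> 2 * int (tgt s)" using size_rel[OF pp] by simp
    then show ?thesis by simp
  qed
  show ?thesis unfolding tdef is_max_triple_core_size_def using ex ub by blast
qed


end
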